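(* Let $D\in\mathcal{R}$. Then $L^+(D)=N^+(D)$, where $L^+(D)=\{T\in\mathcal{R}: T<D,\ |T|>|D|$, and there is no $S\in\mathcal{R}$ with $T<S<D\}$.
   Context: Let $n\ge 1$ and $\Phi^+=\{(i,j)\in\mathbb{Z}^2:1\le j<i\le n\}$, with rows $\mathcal{R}_k=\{(k,s)\in\Phi^+\}$ and columns $\mathcal{C}_k=\{(r,k)\in\Phi^+\}$. A rook placement is a subset $D\subseteq\Phi^+$ with $|D\cap\mathcal{R}_k|\le1$ and $|D\cap\mathcal{C}_k|\le1$ for all $k$; $\mathcal{R}$ is the set of rook placements. For $D\in\mathcal{R}$, $R_D$ is the $n\times n$ integer matrix with $(R_D)_{i,j}=\#\{(a,b)\in D:a\ge i,\ b\le j\}$ for $i>j$ and $0$ otherwise; $D\le D'$ means $R_D\le R_{D'}$ entrywise. Order on $\Phi^+$: $(a,b)\le(c,d)$ iff $a\le c$ and $b\ge d$. For $(i,j)\in D$, $C_{(i,j)}(D)$ is the set of integer pairs $(\alpha,\beta)$ such that: $i>\beta\ge\alpha>j$; $D\cap\mathcal{R}_\alpha=\emptyset$ and $D\cap\mathcal{C}_\beta=\emptyset$; $D\cap\mathcal{R}_k\ne\emptyset$ and $D\cap\mathcal{C}_k\neq\emptyset$ for all $\alpha<k<\beta$; whenever $(p,q)\in D$, $(p,q)<(i,j)$ and $(p,q)\not<(\alpha,j)$, one has $(p,q)<(i,\beta)$; and if $\alpha\ne\beta$ then $D\cap\mathcal{R}_\beta\ne\emptyset$ and $D\cap\mathcal{C}_\alpha\ne\emptyset$.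 For $(\alpha,\beta)\in C_{(i,j)}(D)$ put $D^{\alpha,\beta}_{(i,j)}=(D\setminus\{(i,j)\})\cup\{(i,\beta),(\alpha,j)\}$, and let $N^+(D)$ be the set of all such $D^{\alpha,\beta}_{(i,j)}$ over $(i,j)\in D$ and $(\alpha,\beta)\in C_{(i,j)}(D)$. *)

theory Defs
  imports Main
begin

definition Phi :: "nat \<Rightarrow> (nat \<times> nat) set" where
  "Phi n = {(i, j). 1 \<le> j \<and> j < i \<and> i \<le> n}"

definition rowR :: "nat \<Rightarrow> nat \<Rightarrow> (nat \<times> nat) set" where
  "rowR n k = {p \<in> Phi n. fst p = k}"

definition colC :: "nat \<Rightarrow> nat \<Rightarrow> (nat \<times> nat) set" where
  "colC n k = {p \<in> Phi n. snd p = k}"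

definition rook :: "nat \<Rightarrow> (nat \<times> nat) set \<Rightarrow> bool" where
  "rook n D \<longleftrightarrow> D \<subseteq> Phi n \<and>
     (\<forall>k. card (D \<inter> rowR n k) \<le> 1 \<and> card (D \<inter> colC n k) \<le> 1)"

definition rankM :: "(nat \<times> nat) set \<Rightarrow> nat \<Rightarrow> nat \<Rightarrow> nat" where
  "rankM D i j = (if i > j then card {(a, b) \<in> D. a \<ge> i \<and> b \<le> j} else 0)"

definition rleq :: "nat \<Rightarrow> (nat \<times> nat) set \<Rightarrow> (nat \<times> nat) set \<Rightarrow> bool" where
  "rleq n D D' \<longleftrightarrow> (\<forall>i \<in> {1..n}. \<forall>j \<in> {1..n}. rankM D i j \<le> rankM D' i j)"

definition rless :: "nat \<Rightarrow> (nat \<times> nat) set \<Rightarrow> (nat \<times> nat) set \<Rightarrow> bool" where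
  "rless n D D' \<longleftrightarrow> rleq n D D' \<and> D \<noteq> D'"

definition pleq :: "nat \<times> nat \<Rightarrow> nat \<times> nat \<Rightarrow> bool" where
  "pleq p q \<longleftrightarrow> fst p \<le> fst q \<and> snd p \<ge> snd q"

definition pless :: "nat \<times> nat \<Rightarrow> nat \<times> nat \<Rightarrow> bool" where
  "pless p q \<longleftrightarrow> pleq p q \<and> p \<noteq> q"

definition Cset :: "nat \<Rightarrow> (nat \<times> nat) set \<Rightarrow> nat \<times> nat \<Rightarrow> (nat \<times> nat) set" where
  "Cset n D ij = (case ij of (i, j) \<Rightarrow>
     {(\<alpha>, \<beta>). i > \<beta> \<and> \<beta> \<ge> \<alpha> \<and> \<alpha> > j
        \<and> D \<inter> rowR n \<alpha> = {} \<and> D \<inter> colC n \<beta> = {}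
        \<and> (\<forall>k. \<alpha> < k \<and> k < \<beta> \<longrightarrow> D \<inter> rowR n k \<noteq> {} \<and> D \<inter> colC n k \<noteq> {})
        \<and> (\<forall>p \<in> D. pless p (i, j) \<and> \<not> pless p (\<alpha>, j) \<longrightarrow> pless p (i, \<beta>))
        \<and> (\<alpha> \<noteq> \<beta> \<longrightarrow> D \<inter> rowR n \<beta> \<noteq> {} \<and> D \<inter> colC n \<alpha> \<noteq> {})})"

definition Nplus :: "nat \<Rightarrow> (nat \<times> nat) set \<Rightarrow> (nat \<times> nat) set set" where
  "Nplus n D = {(D - {(i, j)}) \<union> {(i, \<beta>), (\<alpha>, j)} | i j \<alpha> \<beta>.
                 (i, j) \<in> D \<and> (\<alpha>, \<beta>) \<in> Cset n D (i, j)}"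

definition Lplus :: "nat \<Rightarrow> (nat \<times> nat) set \<Rightarrow> (nat \<times> nat) set set" where
  "Lplus n D = {T. rook n T \<and> rless n T D \<and> card T > card D \<and>
                 \<not> (\<exists>S. rook n S \<and> rless n T S \<and> rless n S D)}"

end

theory Submission
  imports Defs
begin


definition Box :: "nat \<Rightarrow> nat \<Rightarrow> (nat\<times>nat) set" where
  "Box x y = {p. x \<le> fst p \<and> snd p \<le> y}"
definition Fc :: "(nat\<times>nat) set \<Rightarrow> nat \<Rightarrow> nat \<Rightarrow> nat" where
  "Fc S x y = card (S \<inter> Box x y)"
definition ind :: "nat\<times>nat \<Rightarrow> nat \<Rightarrow> nat \<Rightarrow> nat" where
  "ind p x y = (if x \<le> fst p \<and> snd p \<le> y then 1 else 0)"

lemma finite_Phi: "finite (Phi n)"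
  by (rule finite_subset[of _ "{1..n}\<times>{1..n}"]) (auto simp: Phi_def)

lemma rook_iff: "rook n S \<longleftrightarrow> S \<subseteq> Phi n \<and>
   (\<forall>p\<in>S. \<forall>q\<in>S. fst p = fst q \<longrightarrow> p = q) \<and> (\<forall>p\<in>S. \<forall>q\<in>S. snd p = snd q \<longrightarrow> p = q)"
proof
  assume r: "rook n S"
  hence sub: "S \<subseteq> Phi n" by (simp add: rook_def)
  hence fin: "finite S" using finite_Phi finite_subset by blast
  have "\<forall>p\<in>S. \<forall>q\<in>S. fst p = fst q \<longrightarrow> p = q"
  proof (intro ballI impI)
    fix p q assume p: "p \<in> S" and q: "q \<in> S" and e: "fst p = fst q"
    have "card (S \<inter> rowR n (fst p)) \<le> 1" using r by (simp add: rook_def)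
    moreover have "p \<in> S \<inter> rowR n (fst p)" "q \<in> S \<inter> rowR n (fst p)"
      using p q e sub by (auto simp: rowR_def)
    ultimately show "p = q" using fin card_le_Suc0_iff_eq[of "S \<inter> rowR n (fst p)"] by auto
  qed
  moreover have "\<forall>p\<in>S. \<forall>q\<in>S. snd p = snd q \<longrightarrow> p = q"
  proof (intro ballI impI)
    fix p q assume p: "p \<in> S" and q: "q \<in> S" and e: "snd p = snd q"
    have "card (S \<inter> colC n (snd p)) \<le> 1" using r by (simp add: rook_def)
    moreover have "p \<in> S \<inter> colC n (snd p)" "q \<in> S \<inter> colC n (snd p)"
      using p q e sub by (auto simp: colC_def)
    ultimately show "p = q" using fin card_le_Suc0_iff_eq[of "S \<inter> colC n (snd p)"] by auto
  qed
  ultimately show "S \<subseteq> Phi n \<and> (\<forall>p\<in>S. \<forall>q\<in>S. fst p = fst q \<longrightarrow> p = q) \<and> (\<forall>p\<in>S. \<forall>q\<in>S. snd p = snd q \<longrightarrow> p = q)"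
    using sub by blast
next
  assume h: "S \<subseteq> Phi n \<and> (\<forall>p\<in>S. \<forall>q\<in>S. fst p = fst q \<longrightarrow> p = q) \<and> (\<forall>p\<in>S. \<forall>q\<in>S. snd p = snd q \<longrightarrow> p = q)"
  hence fin: "finite S" using finite_Phi finite_subset by blast
  have "card (S \<inter> rowR n k) \<le> 1" for k
    using h fin card_le_Suc0_iff_eq[of "S \<inter> rowR n k"] by (auto simp: rowR_def)
  moreover have "card (S \<inter> colC n k) \<le> 1" for k
    using h fin card_le_Suc0_iff_eq[of "S \<inter> colC n k"] by (auto simp: colC_def)
  ultimately show "rook n S" using h by (simp add: rook_def)
qed

lemma rook_finite: "rook n S \<Longrightarrow> finite S"
  using finite_Phi finite_subset by (auto simp: rook_def)

lemma Fc_zero_big: "S \<subseteq> Phi n \<Longrightarrow> n < x \<Longrightarrow> Fc S x y = 0"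
  unfolding Fc_def Box_def Phi_def by (rule card_eq_0_iff[THEN iffD2]) auto
lemma Fc_zero0: "S \<subseteq> Phi n \<Longrightarrow> Fc S x 0 = 0"
  unfolding Fc_def Box_def Phi_def by (rule card_eq_0_iff[THEN iffD2]) auto

lemma rankM_Fc: "y < x \<Longrightarrow> rankM S x y = Fc S x y"
  unfolding rankM_def Fc_def Box_def
  by (auto intro!: arg_cong[where f=card])

lemma rleq_Fc: assumes "A \<subseteq> Phi n" "B \<subseteq> Phi n"
  shows "rleq n A B \<longleftrightarrow> (\<forall>x y. y < x \<longrightarrow> Fc A x y \<le> Fc B x y)"
proof
  assume r: "rleq n A B"
  show "\<forall>x y. y < x \<longrightarrow> Fc A x y \<le> Fc B x y"
  proof (intro allI impI)
    fix x y :: nat assume yx: "y < x"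
    show "Fc A x y \<le> Fc B x y"
    proof (cases "n < x \<or> y = 0")
      case True thus ?thesis using Fc_zero_big[OF assms(1)] Fc_zero0[OF assms(1)] by auto
    next
      case False
      hence "x \<in> {1..n}" "y \<in> {1..n}" using yx by auto
      hence "rankM A x y \<le> rankM B x y" using r by (simp add: rleq_def)
      thus ?thesis using yx by (simp add: rankM_Fc)
    qed
  qed
next
  assume h: "\<forall>x y. y < x \<longrightarrow> Fc A x y \<le> Fc B x y"
  show "rleq n A B" unfolding rleq_def
  proof (intro ballI)
    fix i j assume "i \<in> {1..n}" "j \<in> {1..n}"
    show "rankM A i j \<le> rankM B i j"
    proof (cases "j < i")
      case True thus ?thesis using h by (simp add: rankM_Fc)
    next
      case False thus ?thesis by (simp add: rankM_def)
    qed
  qed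
qed

lemma Fc_swap: assumes "finite T" "P \<subseteq> T" "Q \<inter> T = {}" "finite Q"
  shows "Fc (T - P \<union> Q) x y + Fc P x y = Fc T x y + Fc Q x y"
proof -
  let ?B = "Box x y"
  have e: "(T - P \<union> Q) \<inter> ?B = (T \<inter> ?B - P \<inter> ?B) \<union> (Q \<inter> ?B)" by blast
  have d: "(T \<inter> ?B - P \<inter> ?B) \<inter> (Q \<inter> ?B) = {}" using assms by blast
  have "card ((T - P \<union> Q) \<inter> ?B) = card (T \<inter> ?B - P \<inter> ?B) + card (Q \<inter> ?B)"
    unfolding e using d assms by (intro card_Un_disjoint) auto
  moreover have "card (T \<inter> ?B - P \<inter> ?B) = card (T \<inter> ?B) - card (P \<inter> ?B)"
    using assms by (intro card_Diff_subset) (auto intro: finite_subset)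
  moreover have "card (P \<inter> ?B) \<le> card (T \<inter> ?B)"
    using assms by (intro card_mono) auto
  ultimately show ?thesis unfolding Fc_def by simp
qed

lemma card_swap: assumes "finite T" "P \<subseteq> T" "Q \<inter> T = {}" "finite Q"
  shows "card (T - P \<union> Q) + card P = card T + card Q"
proof -
  have "card (T - P \<union> Q) = card (T - P) + card Q"
    using assms by (intro card_Un_disjoint) auto
  moreover have "card (T - P) = card T - card P" using assms by (intro card_Diff_subset) (auto intro: finite_subset)
  moreover have "card P \<le> card T" using assms by (intro card_mono) auto
  ultimately show ?thesis by simp
qed

lemma Fc_empty[simp]: "Fc {} x y = 0" by (simp add: Fc_def)
lemma Fc_insert[simp]: "finite A \<Longrightarrow> p \<notin> A \<Longrightarrow> Fc (insert p A) x y = ind p x y + Fc A x y"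
  unfolding Fc_def ind_def Box_def by (auto simp: Int_insert_left)

lemma local_id: assumes "finite S" "1 \<le> y"
  shows "Fc S x y + Fc S (Suc x) (y-1) = Fc S (Suc x) y + Fc S x (y-1) + (if (x,y) \<in> S then 1 else 0)"
proof -
  define r where "r z = card {p\<in>S. fst p = x \<and> snd p \<le> z}" for z
  have a: "Fc S x z = Fc S (Suc x) z + r z" for z
  proof -
    have e: "S \<inter> Box x z = (S \<inter> Box (Suc x) z) \<union> {p\<in>S. fst p = x \<and> snd p \<le> z}"
      by (auto simp: Box_def)
    show ?thesis unfolding Fc_def r_def e using assms(1)
      by (intro card_Un_disjoint) (auto simp: Box_def)
  qed
  have b: "r y = r (y-1) + (if (x,y) \<in> S then 1 else 0)"
  proof -
    have e: "{p\<in>S. fst p = x \<and> snd p \<le> y} = {p\<in>S. fst p = x \<and> snd p \<le> y-1} \<union> ({(x,y)} \<inter> S)"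
      using assms(2) by auto
    have "card ({p\<in>S. fst p = x \<and> snd p \<le> y-1} \<union> ({(x,y)} \<inter> S)) = r (y-1) + card ({(x,y)} \<inter> S)"
      unfolding r_def using assms by (intro card_Un_disjoint) auto
    thus ?thesis unfolding r_def e by (auto simp: r_def)
  qed
  show ?thesis using a[of y] a[of "y-1"] b by simp
qed


lemma point_det: assumes "finite A" "finite B" "1 \<le> y"
  "Fc A x y = Fc B x y" "Fc A (Suc x) y = Fc B (Suc x) y"
  "Fc A x (y-1) = Fc B x (y-1)" "Fc A (Suc x) (y-1) = Fc B (Suc x) (y-1)"
  shows "(x,y) \<in> A \<longleftrightarrow> (x,y) \<in> B"
proof -
  have "(if (x,y) \<in> A then 1 else 0::nat) = (if (x,y) \<in> B then 1 else 0)"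
    using local_id[OF assms(1,3), of x] local_id[OF assms(2,3), of x] assms(4-7) by simp
  thus ?thesis by (simp split: if_splits)
qed

lemma Fc_split: "finite A \<Longrightarrow> Fc A x y = Fc (A - R) x y + Fc (A \<inter> R) x y"
  unfolding Fc_def
proof -
  assume "finite A"
  have e: "A \<inter> Box x y = ((A - R) \<inter> Box x y) \<union> ((A \<inter> R) \<inter> Box x y)" by blast
  show "card (A \<inter> Box x y) = card ((A - R) \<inter> Box x y) + card ((A \<inter> R) \<inter> Box x y)"
    by (subst e, rule card_Un_disjoint) (use \<open>finite A\<close> in auto)
qed

lemma Fc_ge1: "finite A \<Longrightarrow> 1 \<le> Fc A x y \<Longrightarrow> \<exists>p\<in>A. x \<le> fst p \<and> snd p \<le> y"
proof -
  assume "1 \<le> Fc A x y"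
  hence "A \<inter> Box x y \<noteq> {}" unfolding Fc_def by (metis card.empty not_one_le_zero)
  thus ?thesis by (auto simp: Box_def)
qed

lemma Fc_le1: "finite A \<Longrightarrow> Fc A x y \<le> 1 \<Longrightarrow> p \<in> A \<Longrightarrow> q \<in> A \<Longrightarrow>
   x \<le> fst p \<Longrightarrow> snd p \<le> y \<Longrightarrow> x \<le> fst q \<Longrightarrow> snd q \<le> y \<Longrightarrow> p = q"
proof -
  assume a: "finite A" "Fc A x y \<le> 1" "p \<in> A" "q \<in> A" "x \<le> fst p" "snd p \<le> y" "x \<le> fst q" "snd q \<le> y"
  have "p \<in> A \<inter> Box x y" "q \<in> A \<inter> Box x y" using a by (auto simp: Box_def)
  moreover have "card (A \<inter> Box x y) \<le> Suc 0" using a(2) by (simp add: Fc_def)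
  ultimately show "p = q" using a(1) card_le_Suc0_iff_eq[of "A \<inter> Box x y"] by auto
qed

lemma split_rook: assumes "rook n D" "(i,j) \<in> D" "j < \<alpha>" "\<alpha> < i" "j < \<beta>" "\<beta> < i"
  "\<forall>p\<in>D. fst p \<noteq> \<alpha>" "\<forall>p\<in>D. snd p \<noteq> \<beta>"
  shows "rook n (D - {(i,j)} \<union> {(i,\<beta>),(\<alpha>,j)})"
proof -
  have r: "D \<subseteq> Phi n" "\<forall>p\<in>D. \<forall>q\<in>D. fst p = fst q \<longrightarrow> p = q" "\<forall>p\<in>D. \<forall>q\<in>D. snd p = snd q \<longrightarrow> p = q"
    using assms(1) by (auto simp: rook_iff)
  have ij: "1 \<le> j" "i \<le> n" using r(1) assms(2) by (auto simp: Phi_def)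
  show ?thesis unfolding rook_iff
  proof (intro conjI)
    show "D - {(i, j)} \<union> {(i, \<beta>), (\<alpha>, j)} \<subseteq> Phi n" using r(1) ij assms(3-6) by (auto simp: Phi_def)
    show "\<forall>p\<in>D - {(i, j)} \<union> {(i, \<beta>), (\<alpha>, j)}. \<forall>q\<in>D - {(i, j)} \<union> {(i, \<beta>), (\<alpha>, j)}. fst p = fst q \<longrightarrow> p = q"
    proof (intro ballI impI)
      fix p q assume p: "p \<in> D - {(i, j)} \<union> {(i, \<beta>), (\<alpha>, j)}" and q: "q \<in> D - {(i, j)} \<union> {(i, \<beta>), (\<alpha>, j)}" and e: "fst p = fst q"
      have rowi: "\<And>c. (i,c) \<in> D \<Longrightarrow> c = j" using r(2) assms(2) by fastforce
      have P: "(p \<in> D \<and> p \<noteq> (i,j)) \<or> p = (i,\<beta>) \<or> p = (\<alpha>,j)" using p by auto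
      have Q: "(q \<in> D \<and> q \<noteq> (i,j)) \<or> q = (i,\<beta>) \<or> q = (\<alpha>,j)" using q by auto
      show "p = q" using P Q
      proof (elim disjE conjE)
        assume "p \<in> D" "q \<in> D" thus "p = q" using r(2) e by blast
      next
        assume "p \<in> D" "p \<noteq> (i,j)" "q = (i,\<beta>)" thus "p = q" using rowi e by (cases p) auto
      next
        assume "p \<in> D" "q = (\<alpha>,j)" thus "p = q" using assms(7) e by auto
      next
        assume "q \<in> D" "q \<noteq> (i,j)" "p = (i,\<beta>)" thus "p = q" using rowi e by (cases q) auto
      next
        assume "q \<in> D" "p = (\<alpha>,j)" thus "p = q" using assms(7) e by auto
      qed (use e assms(4) in auto)
    qed
    show "\<forall>p\<in>D - {(i, j)} \<union> {(i, \<beta>), (\<alpha>, j)}. \<forall>q\<in>D - {(i, j)} \<union> {(i, \<beta>), (\<alpha>, j)}. snd p = snd q \<longrightarrow> p = q"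
    proof (intro ballI impI)
      fix p q assume p: "p \<in> D - {(i, j)} \<union> {(i, \<beta>), (\<alpha>, j)}" and q: "q \<in> D - {(i, j)} \<union> {(i, \<beta>), (\<alpha>, j)}" and e: "snd p = snd q"
      have colj: "\<And>c. (c,j) \<in> D \<Longrightarrow> c = i" using r(3) assms(2) by fastforce
      have P: "(p \<in> D \<and> p \<noteq> (i,j)) \<or> p = (i,\<beta>) \<or> p = (\<alpha>,j)" using p by auto
      have Q: "(q \<in> D \<and> q \<noteq> (i,j)) \<or> q = (i,\<beta>) \<or> q = (\<alpha>,j)" using q by auto
      show "p = q" using P Q
      proof (elim disjE conjE)
        assume "p \<in> D" "q \<in> D" thus "p = q" using r(3) e by blast
      next
        assume "p \<in> D" "p \<noteq> (i,j)" "q = (\<alpha>,j)" thus "p = q" using colj e by (cases p) auto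
      next
        assume "p \<in> D" "q = (i,\<beta>)" thus "p = q" using assms(8) e by auto
      next
        assume "q \<in> D" "q \<noteq> (i,j)" "p = (\<alpha>,j)" thus "p = q" using colj e by (cases q) auto
      next
        assume "q \<in> D" "p = (i,\<beta>)" thus "p = q" using assms(8) e by auto
      qed (use e assms(3,5) in auto)
    qed
  qed
qed

lemma split_Fc: assumes "finite D" "(i,j) \<in> D" "j < \<alpha>" "\<alpha> < i" "j < \<beta>"
  "\<forall>p\<in>D. fst p \<noteq> \<alpha>" "\<forall>p\<in>D. snd p \<noteq> \<beta>"
  shows "Fc (D - {(i,j)} \<union> {(i,\<beta>),(\<alpha>,j)}) x y + ind (i,j) x y = Fc D x y + ind (i,\<beta>) x y + ind (\<alpha>,j) x y"
proof -
  have "Fc (D - {(i,j)} \<union> {(i,\<beta>),(\<alpha>,j)}) x y + Fc {(i,j)} x y = Fc D x y + Fc {(i,\<beta>),(\<alpha>,j)} x y"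
    using assms by (intro Fc_swap) auto
  moreover have "(i,\<beta>) \<noteq> (\<alpha>,j)" using assms by auto
  ultimately show ?thesis by simp
qed

lemma split_card: assumes "finite D" "(i,j) \<in> D" "j < \<alpha>" "\<alpha> < i" "j < \<beta>"
  "\<forall>p\<in>D. fst p \<noteq> \<alpha>" "\<forall>p\<in>D. snd p \<noteq> \<beta>"
  shows "card (D - {(i,j)} \<union> {(i,\<beta>),(\<alpha>,j)}) = Suc (card D)"
proof -
  have "card (D - {(i,j)} \<union> {(i,\<beta>),(\<alpha>,j)}) + card {(i,j)} = card D + card {(i,\<beta>),(\<alpha>,j)}"
    using assms by (intro card_swap) auto
  moreover have "(i,\<beta>) \<noteq> (\<alpha>,j)" using assms by auto
  ultimately show ?thesis by simp
qed

lemma rowE: "D \<subseteq> Phi n \<Longrightarrow> (D \<inter> rowR n k = {}) \<longleftrightarrow> (\<forall>p\<in>D. fst p \<noteq> k)"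
  by (auto simp: rowR_def)
lemma colE: "D \<subseteq> Phi n \<Longrightarrow> (D \<inter> colC n k = {}) \<longleftrightarrow> (\<forall>p\<in>D. snd p \<noteq> k)"
  by (auto simp: colC_def)



lemma Cset_iff: "(\<alpha>,\<beta>) \<in> Cset n D (i,j) \<longleftrightarrow> i > \<beta> \<and> \<beta> \<ge> \<alpha> \<and> \<alpha> > j
        \<and> D \<inter> rowR n \<alpha> = {} \<and> D \<inter> colC n \<beta> = {}
        \<and> (\<forall>k. \<alpha> < k \<and> k < \<beta> \<longrightarrow> D \<inter> rowR n k \<noteq> {} \<and> D \<inter> colC n k \<noteq> {})
        \<and> (\<forall>p \<in> D. pless p (i, j) \<and> \<not> pless p (\<alpha>, j) \<longrightarrow> pless p (i, \<beta>))
        \<and> (\<alpha> \<noteq> \<beta> \<longrightarrow> D \<inter> rowR n \<beta> \<noteq> {} \<and> D \<inter> colC n \<alpha> \<noteq> {})"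
  by (simp add: Cset_def)

lemma rowNE: "D \<subseteq> Phi n \<Longrightarrow> (D \<inter> rowR n k \<noteq> {}) \<longleftrightarrow> (\<exists>p\<in>D. fst p = k)"
  by (auto simp: rowR_def)
lemma colNE: "D \<subseteq> Phi n \<Longrightarrow> (D \<inter> colC n k \<noteq> {}) \<longleftrightarrow> (\<exists>p\<in>D. snd p = k)"
  by (auto simp: colC_def)

lemma zero_out: "\<beta> < i \<Longrightarrow> \<alpha> \<le> \<beta> \<Longrightarrow> j < \<alpha> \<Longrightarrow>
  (x' \<le> \<alpha> \<and> y' < \<beta>) \<or> i < x' \<or> y' < j \<or> \<beta> \<le> y' \<Longrightarrow> y' < x' \<Longrightarrow>
  ind (i,j) x' y' = ind (i,\<beta>) x' y' + ind (\<alpha>,j) x' y'"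
  unfolding ind_def by auto

lemma N_sub_L: assumes rD: "rook n D" and TN: "T \<in> Nplus n D" shows "T \<in> Lplus n D"
proof -
  from TN obtain i j \<alpha> \<beta> where T: "T = D - {(i,j)} \<union> {(i,\<beta>),(\<alpha>,j)}" and ij: "(i,j) \<in> D"
    and C: "(\<alpha>,\<beta>) \<in> Cset n D (i,j)" unfolding Nplus_def by blast
  have sub: "D \<subseteq> Phi n" using rD by (simp add: rook_def)
  have fin: "finite D" using rD rook_finite by blast
  have rD2: "\<forall>p\<in>D. \<forall>q\<in>D. fst p = fst q \<longrightarrow> p = q" "\<forall>p\<in>D. \<forall>q\<in>D. snd p = snd q \<longrightarrow> p = q"
    using rD by (auto simp: rook_iff)
  from C have c1: "\<beta> < i" "\<alpha> \<le> \<beta>" "j < \<alpha>" by (auto simp: Cset_iff)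
  from C sub have rowa: "\<forall>p\<in>D. fst p \<noteq> \<alpha>" and colb: "\<forall>p\<in>D. snd p \<noteq> \<beta>"
    by (auto simp: Cset_iff rowE colE)
  from C sub have mid: "\<And>k. \<alpha> < k \<Longrightarrow> k < \<beta> \<Longrightarrow> (\<exists>p\<in>D. fst p = k) \<and> (\<exists>p\<in>D. snd p = k)"
    by (auto simp: Cset_iff rowNE colNE)
  from C have box: "\<forall>p\<in>D. pless p (i,j) \<and> \<not> pless p (\<alpha>,j) \<longrightarrow> pless p (i,\<beta>)"
    by (auto simp: Cset_iff)
  from C sub have ne: "\<alpha> \<noteq> \<beta> \<Longrightarrow> (\<exists>p\<in>D. fst p = \<beta>) \<and> (\<exists>p\<in>D. snd p = \<alpha>)"
    by (auto simp: Cset_iff rowNE colNE)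
  have ijP: "1 \<le> j" "j < i" "i \<le> n" using sub ij by (auto simp: Phi_def)
  have rT: "rook n T" unfolding T using split_rook[OF rD ij] c1 rowa colb by auto
  have Tsub: "T \<subseteq> Phi n" using rT by (simp add: rook_def)
  have finT: "finite T" using rT rook_finite by blast
  have FT: "\<And>x y. Fc T x y + ind (i,j) x y = Fc D x y + ind (i,\<beta>) x y + ind (\<alpha>,j) x y"
    unfolding T using split_Fc[OF fin ij] c1 rowa colb by auto
  have cardT: "card T = Suc (card D)"
    unfolding T using split_card[OF fin ij] c1 rowa colb by auto
  have indle: "\<And>x y. y < x \<Longrightarrow> ind (i,\<beta>) x y + ind (\<alpha>,j) x y \<le> ind (i,j) x y"
    using c1 unfolding ind_def by auto
  have leTD: "\<forall>x y. y < x \<longrightarrow> Fc T x y \<le> Fc D x y"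
  proof (intro allI impI)
    fix x y :: nat assume "y < x"
    thus "Fc T x y \<le> Fc D x y" using FT[of x y] indle[of y x] by linarith
  qed
  have ijT: "(i,j) \<notin> T" unfolding T using c1 by auto
  have TD: "T \<noteq> D" using ijT ij by blast
  have rlTD: "rless n T D" unfolding rless_def using rleq_Fc[OF Tsub sub] leTD TD by blast
  have nob: "\<not> (\<exists>S. rook n S \<and> rless n T S \<and> rless n S D)"
  proof
    assume "\<exists>S. rook n S \<and> rless n T S \<and> rless n S D"
    then obtain S where rS: "rook n S" and TS: "rless n T S" and SD: "rless n S D" by blast
    have Ssub: "S \<subseteq> Phi n" using rS by (simp add: rook_def)
    have finS: "finite S" using rS rook_finite by blast
    have rS2: "\<forall>p\<in>S. \<forall>q\<in>S. fst p = fst q \<longrightarrow> p = q" "\<forall>p\<in>S. \<forall>q\<in>S. snd p = snd q \<longrightarrow> p = q"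
      using rS by (auto simp: rook_iff)
    have hTS: "\<And>x y. y < x \<Longrightarrow> Fc T x y \<le> Fc S x y" using TS rleq_Fc[OF Tsub Ssub] by (auto simp: rless_def)
    have hSD: "\<And>x y. y < x \<Longrightarrow> Fc S x y \<le> Fc D x y" using SD rleq_Fc[OF Ssub sub] by (auto simp: rless_def)
    have ST: "S \<noteq> T" and SD': "S \<noteq> D" using TS SD by (auto simp: rless_def)
    define Rect where "Rect = {p. \<alpha> \<le> fst p \<and> fst p \<le> i \<and> j \<le> snd p \<and> snd p \<le> \<beta>}"
    have eqSD: "\<And>x y. y < x \<Longrightarrow> ind (i,j) x y = ind (i,\<beta>) x y + ind (\<alpha>,j) x y \<Longrightarrow> Fc S x y = Fc D x y"
    proof -
      fix x y :: nat assume yx: "y < x" and z: "ind (i,j) x y = ind (i,\<beta>) x y + ind (\<alpha>,j) x y"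
      have "Fc T x y = Fc D x y" using FT[of x y] z by simp
      thus "Fc S x y = Fc D x y" using hTS[OF yx] hSD[OF yx] by simp
    qed
    have out: "\<And>x y. 1 \<le> y \<Longrightarrow> y < x \<Longrightarrow> (x,y) \<notin> Rect \<Longrightarrow> ((x,y) \<in> S \<longleftrightarrow> (x,y) \<in> D)"
    proof -
      fix x y :: nat assume y1: "1 \<le> y" and yx: "y < x" and nr: "(x,y) \<notin> Rect"
      have o: "x < \<alpha> \<or> i < x \<or> y < j \<or> \<beta> < y" using nr by (auto simp: Rect_def)
      have z: "\<And>x' y'. x' \<in> {x, Suc x} \<Longrightarrow> y' \<in> {y, y-1} \<Longrightarrow> ind (i,j) x' y' = ind (i,\<beta>) x' y' + ind (\<alpha>,j) x' y'"
      proof -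
        fix x' y' assume "x' \<in> {x, Suc x}" "y' \<in> {y, y-1}"
        hence "(x' \<le> \<alpha> \<and> y' < \<beta>) \<or> i < x' \<or> y' < j \<or> \<beta> \<le> y'" "y' < x'" using o yx y1 c1 by auto
        thus "ind (i,j) x' y' = ind (i,\<beta>) x' y' + ind (\<alpha>,j) x' y'" using zero_out[OF c1] by blast
      qed
      show "((x,y) \<in> S \<longleftrightarrow> (x,y) \<in> D)"
        by (rule point_det[OF finS fin y1]; rule eqSD; (use yx z in auto))
    qed
    have SmR: "S - Rect = D - Rect"
    proof
      show "S - Rect \<subseteq> D - Rect"
      proof
        fix p assume p: "p \<in> S - Rect"
        obtain x y where pe: "p = (x,y)" by (cases p)
        have "1 \<le> y" "y < x" using p pe Ssub by (auto simp: Phi_def)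
        thus "p \<in> D - Rect" using out p pe by auto
      qed
      show "D - Rect \<subseteq> S - Rect"
      proof
        fix p assume p: "p \<in> D - Rect"
        obtain x y where pe: "p = (x,y)" by (cases p)
        have "1 \<le> y" "y < x" using p pe sub by (auto simp: Phi_def)
        thus "p \<in> S - Rect" using out p pe by auto
      qed
    qed
    have DR: "D \<inter> Rect = {(i,j)}"
    proof
      show "{(i,j)} \<subseteq> D \<inter> Rect" using ij c1 by (auto simp: Rect_def)
      show "D \<inter> Rect \<subseteq> {(i,j)}"
      proof
        fix p assume p: "p \<in> D \<inter> Rect"
        show "p \<in> {(i,j)}"
        proof (rule ccontr)
          assume np: "p \<notin> {(i,j)}"
          have a1: "fst p \<noteq> \<alpha>" "snd p \<noteq> \<beta>" using p rowa colb by auto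
          have "pless p (i,j)" using p np by (auto simp: Rect_def pless_def pleq_def)
          moreover have "\<not> pless p (\<alpha>,j)" using p a1 by (auto simp: Rect_def pless_def pleq_def)
          ultimately have "pless p (i,\<beta>)" using box p by blast
          thus False using p a1 by (auto simp: Rect_def pless_def pleq_def)
        qed
      qed
    qed
    define s where "s = S \<inter> Rect"
    have fins: "finite s" using finS by (simp add: s_def)
    have FS: "\<And>x y. Fc S x y = Fc (D - Rect) x y + Fc s x y"
      using Fc_split[OF finS, of _ _ Rect] SmR by (simp add: s_def)
    have FD: "\<And>x y. Fc D x y = Fc (D - Rect) x y + ind (i,j) x y"
      using Fc_split[OF fin, of _ _ Rect] DR by simp
    have s1: "1 \<le> Fc s \<alpha> j"
    proof -
      have "Fc S \<alpha> j = Fc D \<alpha> j" by (rule eqSD) (use c1 in \<open>auto simp: ind_def\<close>)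
      moreover have "ind (i,j) \<alpha> j = 1" using c1 by (simp add: ind_def)
      ultimately show ?thesis using FS FD by (metis add_left_cancel order_refl)
    qed
    have s2: "1 \<le> Fc s i \<beta>"
    proof -
      have "Fc S i \<beta> = Fc D i \<beta>" by (rule eqSD) (use c1 in \<open>auto simp: ind_def\<close>)
      moreover have "ind (i,j) i \<beta> = 1" using c1 by (simp add: ind_def)
      ultimately show ?thesis using FS FD by (metis add_left_cancel order_refl)
    qed
    have s3: "Fc s \<alpha> (\<alpha>-1) \<le> 1"
    proof -
      have "Fc S \<alpha> (\<alpha>-1) \<le> Fc D \<alpha> (\<alpha>-1)" by (rule hSD) (use c1 in auto)
      moreover have "ind (i,j) \<alpha> (\<alpha>-1) \<le> 1" by (simp add: ind_def)
      ultimately show ?thesis using FS FD by (metis add_le_cancel_left le_trans)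
    qed
    have s4: "Fc s (Suc \<beta>) \<beta> \<le> 1"
    proof -
      have "Fc S (Suc \<beta>) \<beta> \<le> Fc D (Suc \<beta>) \<beta>" by (rule hSD) auto
      moreover have "ind (i,j) (Suc \<beta>) \<beta> \<le> 1" by (simp add: ind_def)
      ultimately show ?thesis using FS FD by (metis add_le_cancel_left le_trans)
    qed
    have sR: "\<And>p. p \<in> s \<Longrightarrow> \<alpha> \<le> fst p \<and> fst p \<le> i \<and> j \<le> snd p \<and> snd p \<le> \<beta> \<and> snd p < fst p \<and> p \<in> S"
      using Ssub by (auto simp: s_def Rect_def Phi_def)
    have block: "\<And>p. p \<in> s \<Longrightarrow> (fst p = \<alpha> \<or> \<beta> < fst p) \<and> (snd p < \<alpha> \<or> snd p = \<beta>)"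
    proof
      fix p assume ps: "p \<in> s"
      note pr = sR[OF ps]
      show "fst p = \<alpha> \<or> \<beta> < fst p"
      proof (rule ccontr)
        assume "\<not> (fst p = \<alpha> \<or> \<beta> < fst p)"
        hence k: "\<alpha> < fst p" "fst p \<le> \<beta>" using pr by auto
        have "\<exists>q\<in>D. fst q = fst p"
        proof (cases "fst p < \<beta>")
          case True thus ?thesis using mid k by blast
        next
          case False hence "fst p = \<beta>" "\<alpha> \<noteq> \<beta>" using k by auto
          thus ?thesis using ne by auto
        qed
        then obtain q where q: "q \<in> D" "fst q = fst p" by blast
        have "q \<notin> Rect"
        proof
          assume "q \<in> Rect" hence "q = (i,j)" using DR q by blast
          thus False using q k c1 by auto
        qed
        hence "q \<in> S" "q \<noteq> p" using q SmR ps by (auto simp: s_def)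
        thus False using rS2 q pr by blast
      qed
      show "snd p < \<alpha> \<or> snd p = \<beta>"
      proof (rule ccontr)
        assume "\<not> (snd p < \<alpha> \<or> snd p = \<beta>)"
        hence k: "\<alpha> \<le> snd p" "snd p < \<beta>" using pr by auto
        have "\<exists>q\<in>D. snd q = snd p"
        proof (cases "\<alpha> < snd p")
          case True thus ?thesis using mid k by blast
        next
          case False hence "snd p = \<alpha>" "\<alpha> \<noteq> \<beta>" using k by auto
          thus ?thesis using ne by auto
        qed
        then obtain q where q: "q \<in> D" "snd q = snd p" by blast
        have "q \<notin> Rect"
        proof
          assume "q \<in> Rect" hence "q = (i,j)" using DR q by blast
          thus False using q k c1 by auto
        qed
        hence "q \<in> S" "q \<noteq> p" using q SmR ps by (auto simp: s_def)
        thus False using rS2 q pr by blast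
      qed
    qed
    have u3: "\<And>p q. p \<in> s \<Longrightarrow> q \<in> s \<Longrightarrow> snd p < \<alpha> \<Longrightarrow> snd q < \<alpha> \<Longrightarrow> p = q"
    proof -
      fix p q assume a: "p \<in> s" "q \<in> s" "snd p < \<alpha>" "snd q < \<alpha>"
      show "p = q" by (rule Fc_le1[OF fins s3 a(1,2)]) (use a sR in auto)
    qed
    have u4: "\<And>p q. p \<in> s \<Longrightarrow> q \<in> s \<Longrightarrow> \<beta> < fst p \<Longrightarrow> \<beta> < fst q \<Longrightarrow> p = q"
    proof -
      fix p q assume a: "p \<in> s" "q \<in> s" "\<beta> < fst p" "\<beta> < fst q"
      show "p = q" by (rule Fc_le1[OF fins s4 a(1,2)]) (use a sR in auto)
    qed
    obtain p1 where p1: "p1 \<in> s" "\<alpha> \<le> fst p1" "snd p1 \<le> j" using Fc_ge1[OF fins s1] by blast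
    obtain p2 where p2: "p2 \<in> s" "i \<le> fst p2" "snd p2 \<le> \<beta>" using Fc_ge1[OF fins s2] by blast
    have p1j: "snd p1 = j" using sR[OF p1(1)] p1 by auto
    have p2i: "fst p2 = i" using sR[OF p2(1)] p2 by auto
    have rowa_s: "\<And>p. p \<in> s \<Longrightarrow> fst p = \<alpha> \<Longrightarrow> snd p < \<alpha>"
      using block sR c1 by fastforce
    have Seq: "S = (D - Rect) \<union> s" using SmR by (auto simp: s_def)
    show False
    proof (cases "p1 = p2")
      case True
      have "s = {(i,j)}"
      proof
        show "{(i,j)} \<subseteq> s" using True p1 p1j p2i by (metis prod.collapse singletonD subsetI)
        show "s \<subseteq> {(i,j)}"
        proof
          fix p assume ps: "p \<in> s"
          have "p = p2"
          proof (cases "\<beta> < fst p")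
            case True thus ?thesis using u4[OF ps p2(1)] p2i c1 by auto
          next
            case False
            hence "fst p = \<alpha>" using block[OF ps] by auto
            hence "snd p < \<alpha>" using rowa_s ps by auto
            thus ?thesis using u3[OF ps p1(1)] p1j c1 \<open>p1 = p2\<close> by auto
          qed
          thus "p \<in> {(i,j)}" using True p1j p2i by (metis prod.collapse singletonI)
        qed
      qed
      hence "S = D" using Seq DR by blast
      thus False using SD' by simp
    next
      case False
      have sp2: "snd p2 = \<beta>"
      proof (rule ccontr)
        assume "snd p2 \<noteq> \<beta>" hence "snd p2 < \<alpha>" using block[OF p2(1)] by auto
        thus False using u3[OF p2(1) p1(1)] p1j c1 False by auto
      qed
      have fp1: "fst p1 = \<alpha>"
      proof (rule ccontr)
        assume "fst p1 \<noteq> \<alpha>" hence "\<beta> < fst p1" using block[OF p1(1)] by auto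
        thus False using u4[OF p1(1) p2(1)] p2i c1 False by auto
      qed
      have "s = {(i,\<beta>),(\<alpha>,j)}"
      proof
        show "{(i,\<beta>),(\<alpha>,j)} \<subseteq> s" using p1 p2 p1j p2i sp2 fp1 by (metis empty_subsetI insert_subset prod.collapse)
        show "s \<subseteq> {(i,\<beta>),(\<alpha>,j)}"
        proof
          fix p assume ps: "p \<in> s"
          show "p \<in> {(i,\<beta>),(\<alpha>,j)}"
          proof (cases "\<beta> < fst p")
            case True hence "p = p2" using u4[OF ps p2(1)] p2i c1 by auto
            thus ?thesis using p2i sp2 by (metis insertI1 prod.collapse)
          next
            case False
            hence "fst p = \<alpha>" using block[OF ps] by auto
            hence "snd p < \<alpha>" using rowa_s ps by auto
            hence "p = p1" using u3[OF ps p1(1)] p1j c1 by auto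
            thus ?thesis using p1j fp1 by (metis insertI1 insertI2 prod.collapse)
          qed
        qed
      qed
      moreover have "T = (D - Rect) \<union> {(i,\<beta>),(\<alpha>,j)}" unfolding T using DR by blast
      ultimately have "S = T" using Seq by simp
      thus False using ST by simp
    qed
  qed
  show ?thesis unfolding Lplus_def using rT rlTD cardT nob by simp
qed



lemma row_dec: "finite S \<Longrightarrow> Fc S x z = Fc S (Suc x) z + card {p\<in>S. fst p = x \<and> snd p \<le> z}"
proof -
  assume f: "finite S"
  have e: "S \<inter> Box x z = (S \<inter> Box (Suc x) z) \<union> {p\<in>S. fst p = x \<and> snd p \<le> z}"
    by (auto simp: Box_def)
  show ?thesis unfolding Fc_def e using f
    by (intro card_Un_disjoint) (auto simp: Box_def)
qed

lemma col_dec: "finite S \<Longrightarrow> z \<le> y \<Longrightarrow> Fc S x y = Fc S x z + card {p\<in>S. x \<le> fst p \<and> z < snd p \<and> snd p \<le> y}"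
proof -
  assume f: "finite S" "z \<le> y"
  have e: "S \<inter> Box x y = (S \<inter> Box x z) \<union> {p\<in>S. x \<le> fst p \<and> z < snd p \<and> snd p \<le> y}"
    using f(2) by (auto simp: Box_def)
  show ?thesis unfolding Fc_def e using f
    by (intro card_Un_disjoint) (auto simp: Box_def)
qed

lemma rook_replace: assumes "rook n T" "P \<subseteq> T" "Q \<subseteq> Phi n"
  "\<forall>p\<in>Q. \<forall>q\<in>Q. fst p = fst q \<longrightarrow> p = q" "\<forall>p\<in>Q. \<forall>q\<in>Q. snd p = snd q \<longrightarrow> p = q"
  "\<forall>q\<in>Q. \<forall>p\<in>T - P. fst p \<noteq> fst q \<and> snd p \<noteq> snd q"
  shows "rook n (T - P \<union> Q)"
proof -
  have r: "T \<subseteq> Phi n" "\<forall>p\<in>T. \<forall>q\<in>T. fst p = fst q \<longrightarrow> p = q" "\<forall>p\<in>T. \<forall>q\<in>T. snd p = snd q \<longrightarrow> p = q"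
    using assms(1) by (auto simp: rook_iff)
  show ?thesis unfolding rook_iff
  proof (intro conjI)
    show "T - P \<union> Q \<subseteq> Phi n" using r(1) assms(3) by blast
    show "\<forall>p\<in>T - P \<union> Q. \<forall>q\<in>T - P \<union> Q. fst p = fst q \<longrightarrow> p = q"
      using r(2) assms(4,6) by (metis Un_iff DiffD1)
    show "\<forall>p\<in>T - P \<union> Q. \<forall>q\<in>T - P \<union> Q. snd p = snd q \<longrightarrow> p = q"
      using r(3) assms(5,6) by (metis Un_iff DiffD1)
  qed
qed



lemma swap_ind1: "y < x \<Longrightarrow> a < cc \<Longrightarrow> cc < i \<Longrightarrow> d < \<beta> \<Longrightarrow> j < a \<Longrightarrow> a \<le> \<beta> \<Longrightarrow>
  ind (i,\<beta>) x y + ind (a,j) x y + ind (cc,d) x y \<le> ind (i,d) x y + ind (cc,j) x y"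
  unfolding ind_def by (simp split: if_split)
lemma swap_ind2: "cc \<le> i \<Longrightarrow> j \<le> d \<Longrightarrow>
  ind (i,d) x y + ind (cc,j) x y \<le> ind (i,j) x y + ind (cc,d) x y"
  unfolding ind_def by (simp split: if_split)

lemma cset_cover: assumes rD: "rook n D" and ij: "(i,j) \<in> D" and c: "j < a" "a \<le> \<beta>" "\<beta> < i"
  and rowa: "\<forall>p\<in>D. fst p \<noteq> a" and colb: "\<forall>p\<in>D. snd p \<noteq> \<beta>"
  and T: "T = D - {(i,j)} \<union> {(i,\<beta>),(a,j)}"
  and cov: "\<And>S. rook n S \<Longrightarrow> (\<forall>x y. y<x \<longrightarrow> Fc T x y \<le> Fc S x y) \<Longrightarrow> (\<forall>x y. y<x \<longrightarrow> Fc S x y \<le> Fc D x y) \<Longrightarrow> S \<noteq> T \<Longrightarrow> S = D"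
  shows "(a,\<beta>) \<in> Cset n D (i,j)"
proof -
  have sub: "D \<subseteq> Phi n" using rD by (simp add: rook_def)
  have fin: "finite D" using rD rook_finite by blast
  have rD2: "\<forall>p\<in>D. \<forall>q\<in>D. fst p = fst q \<longrightarrow> p = q" "\<forall>p\<in>D. \<forall>q\<in>D. snd p = snd q \<longrightarrow> p = q"
    using rD by (auto simp: rook_iff)
  have rowi: "\<And>c. (i,c) \<in> D \<Longrightarrow> c = j" using rD2(1) ij by fastforce
  have colj: "\<And>c. (c,j) \<in> D \<Longrightarrow> c = i" using rD2(2) ij by fastforce
  have ijP: "1 \<le> j" "j < i" "i \<le> n" using sub ij by (auto simp: Phi_def)
  have FT: "\<And>x y. Fc T x y + ind (i,j) x y = Fc D x y + ind (i,\<beta>) x y + ind (a,j) x y"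
    unfolding T using split_Fc[OF fin ij] c rowa colb by auto
  have ijS: "\<And>S. S = D \<Longrightarrow> (i,j) \<in> S" using ij by simp
  have rowsplit: "\<And>k. a < k \<Longrightarrow> k \<le> \<beta> \<Longrightarrow> (\<forall>p\<in>D. fst p \<noteq> k) \<Longrightarrow> False"
  proof -
    fix k assume k: "a < k" "k \<le> \<beta>" "\<forall>p\<in>D. fst p \<noteq> k"
    define S where "S = D - {(i,j)} \<union> {(i,\<beta>),(k,j)}"
    have rS: "rook n S" unfolding S_def using split_rook[OF rD ij] c k colb by auto
    have FS: "\<And>x y. Fc S x y + ind (i,j) x y = Fc D x y + ind (i,\<beta>) x y + ind (k,j) x y"
      unfolding S_def using split_Fc[OF fin ij] c k colb by auto
    have "\<forall>x y. y<x \<longrightarrow> Fc T x y \<le> Fc S x y"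
    proof (intro allI impI)
      fix x y :: nat assume "y < x"
      have "ind (a,j) x y \<le> ind (k,j) x y" using k by (auto simp: ind_def)
      thus "Fc T x y \<le> Fc S x y" using FT[of x y] FS[of x y] by linarith
    qed
    moreover have "\<forall>x y. y<x \<longrightarrow> Fc S x y \<le> Fc D x y"
    proof (intro allI impI)
      fix x y :: nat assume "y < x"
      hence "ind (i,\<beta>) x y + ind (k,j) x y \<le> ind (i,j) x y" using k c by (auto simp: ind_def)
      thus "Fc S x y \<le> Fc D x y" using FS[of x y] by linarith
    qed
    moreover have "S \<noteq> T"
    proof
      assume "S = T"
      moreover have "(k,j) \<in> S" by (simp add: S_def)
      ultimately have "(k,j) \<in> T" by simp
      thus False unfolding T using k c colj by auto
    qed
    ultimately have "S = D" using cov rS by blast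
    moreover have "(i,j) \<notin> S" unfolding S_def using k c by auto
    ultimately show False using ij by simp
  qed
  have colsplit: "\<And>k. a \<le> k \<Longrightarrow> k < \<beta> \<Longrightarrow> (\<forall>p\<in>D. snd p \<noteq> k) \<Longrightarrow> False"
  proof -
    fix k assume k: "a \<le> k" "k < \<beta>" "\<forall>p\<in>D. snd p \<noteq> k"
    define S where "S = D - {(i,j)} \<union> {(i,k),(a,j)}"
    have rS: "rook n S" unfolding S_def using split_rook[OF rD ij] c k rowa by auto
    have FS: "\<And>x y. Fc S x y + ind (i,j) x y = Fc D x y + ind (i,k) x y + ind (a,j) x y"
      unfolding S_def using split_Fc[OF fin ij] c k rowa by auto
    have "\<forall>x y. y<x \<longrightarrow> Fc T x y \<le> Fc S x y"
    proof (intro allI impI)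
      fix x y :: nat assume "y < x"
      have "ind (i,\<beta>) x y \<le> ind (i,k) x y" using k by (auto simp: ind_def)
      thus "Fc T x y \<le> Fc S x y" using FT[of x y] FS[of x y] by linarith
    qed
    moreover have "\<forall>x y. y<x \<longrightarrow> Fc S x y \<le> Fc D x y"
    proof (intro allI impI)
      fix x y :: nat assume "y < x"
      hence "ind (i,k) x y + ind (a,j) x y \<le> ind (i,j) x y" using k c by (auto simp: ind_def)
      thus "Fc S x y \<le> Fc D x y" using FS[of x y] by linarith
    qed
    moreover have "S \<noteq> T"
    proof
      assume "S = T"
      moreover have "(i,k) \<in> S" by (simp add: S_def)
      ultimately have "(i,k) \<in> T" by simp
      thus False unfolding T using k c rowi by auto
    qed
    ultimately have "S = D" using cov rS by blast
    moreover have "(i,j) \<notin> S" unfolding S_def using k c by auto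
    ultimately show False using ij by simp
  qed
  have swap: "\<And>cc d. (cc,d) \<in> D \<Longrightarrow> a < cc \<Longrightarrow> cc \<le> i \<Longrightarrow> j \<le> d \<Longrightarrow> d < \<beta> \<Longrightarrow> (cc,d) \<noteq> (i,j) \<Longrightarrow> False"
  proof -
    fix cc d assume cd: "(cc,d) \<in> D" "a < cc" "cc \<le> i" "j \<le> d" "d < \<beta>" "(cc,d) \<noteq> (i,j)"
    have ci: "cc \<noteq> i" using rowi cd by auto
    have dj: "d \<noteq> j" using colj cd by auto
    have cdP: "d < cc" "cc \<le> n" using cd sub by (auto simp: Phi_def)
    define S where "S = D - {(i,j),(cc,d)} \<union> {(i,d),(cc,j)}"
    have rS: "rook n S" unfolding S_def
    proof (rule rook_replace[OF rD])
      show "{(i, j), (cc, d)} \<subseteq> D" using ij cd by auto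
      show "{(i, d), (cc, j)} \<subseteq> Phi n" using cd ci dj ijP c cdP by (auto simp: Phi_def)
      show "\<forall>p\<in>{(i, d), (cc, j)}. \<forall>q\<in>{(i, d), (cc, j)}. fst p = fst q \<longrightarrow> p = q" using ci by auto
      show "\<forall>p\<in>{(i, d), (cc, j)}. \<forall>q\<in>{(i, d), (cc, j)}. snd p = snd q \<longrightarrow> p = q" using dj by auto
      show "\<forall>q\<in>{(i, d), (cc, j)}. \<forall>p\<in>D - {(i, j), (cc, d)}. fst p \<noteq> fst q \<and> snd p \<noteq> snd q"
      proof (intro ballI)
        fix q p assume q: "q \<in> {(i, d), (cc, j)}" and p: "p \<in> D - {(i, j), (cc, d)}"
        obtain u v where pe: "p = (u,v)" by (cases p)
        have "u = i \<Longrightarrow> False" using rowi p pe by auto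
        moreover have "v = j \<Longrightarrow> False" using colj p pe by auto
        moreover have "u = cc \<Longrightarrow> False" using rD2(1) p pe cd(1) by fastforce
        moreover have "v = d \<Longrightarrow> False" using rD2(2) p pe cd(1) by fastforce
        ultimately show "fst p \<noteq> fst q \<and> snd p \<noteq> snd q" using q pe by auto
      qed
    qed
    have FS0: "\<And>x y. Fc S x y + Fc {(i,j),(cc,d)} x y = Fc D x y + Fc {(i,d),(cc,j)} x y"
      unfolding S_def using fin ij cd ci dj rowi[of d] colj[of cc] by (intro Fc_swap) auto
    have FS: "\<And>x y. Fc S x y + ind (i,j) x y + ind (cc,d) x y = Fc D x y + ind (i,d) x y + ind (cc,j) x y"
      using FS0 ci dj by (simp add: add.assoc)
    have "\<forall>x y. y<x \<longrightarrow> Fc T x y \<le> Fc S x y"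
    proof (intro allI impI)
      fix x y :: nat assume "y < x"
      have "ind (i,\<beta>) x y + ind (a,j) x y + ind (cc,d) x y \<le> ind (i,d) x y + ind (cc,j) x y"
        using swap_ind1[of y x a cc i d \<beta> j] cd c \<open>y < x\<close> ci by linarith
      thus "Fc T x y \<le> Fc S x y" using FT[of x y] FS[of x y] by linarith
    qed
    moreover have "\<forall>x y. y<x \<longrightarrow> Fc S x y \<le> Fc D x y"
    proof (intro allI impI)
      fix x y :: nat assume "y < x"
      have "ind (i,d) x y + ind (cc,j) x y \<le> ind (i,j) x y + ind (cc,d) x y"
        using swap_ind2[of cc i j d x y] cd by linarith
      thus "Fc S x y \<le> Fc D x y" using FS[of x y] by linarith
    qed
    moreover have "S \<noteq> T"
    proof
      assume "S = T"
      moreover have "(cc,d) \<in> T" unfolding T using cd by auto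
      moreover have "(cc,d) \<notin> S" unfolding S_def using ci dj by auto
      ultimately show False by simp
    qed
    ultimately have "S = D" using cov rS by blast
    moreover have "(i,j) \<notin> S" unfolding S_def using ci dj by auto
    ultimately show False using ij by simp
  qed
  show ?thesis unfolding Cset_iff
  proof (intro conjI allI impI ballI)
    show "\<beta> < i" "a \<le> \<beta>" "j < a" using c by auto
    show "D \<inter> rowR n a = {}" using rowa sub rowE by blast
    show "D \<inter> colC n \<beta> = {}" using colb sub colE by blast
  next
    fix k assume kk: "a < k \<and> k < \<beta>"
    have "\<exists>p\<in>D. fst p = k" using rowsplit[of k] kk by (meson less_imp_le)
    thus "D \<inter> rowR n k \<noteq> {}" using rowNE[OF sub] by blast
  next
    fix k assume kk: "a < k \<and> k < \<beta>"
    have "\<exists>p\<in>D. snd p = k" using colsplit[of k] kk by (meson less_imp_le)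
    thus "D \<inter> colC n k \<noteq> {}" using colNE[OF sub] by blast
  next
    fix p assume pD: "p \<in> D" and h: "pless p (i, j) \<and> \<not> pless p (a, j)"
    obtain cc d where pe: "p = (cc,d)" by (cases p)
    have "cc \<noteq> a" using rowa pD pe by auto
    hence h2: "cc \<le> i" "j \<le> d" "(cc,d) \<noteq> (i,j)" "a < cc" using h pe by (auto simp: pless_def pleq_def)
    have "d \<noteq> \<beta>" using colb pD pe by auto
    moreover have "\<beta> \<le> d"
    proof (rule ccontr)
      assume "\<not> \<beta> \<le> d" hence "d < \<beta>" by simp
      thus False using swap[of cc d] pD pe h2 by blast
    qed
    ultimately show "pless p (i, \<beta>)" using h2 pe by (auto simp: pless_def pleq_def)
  next
    assume "a \<noteq> \<beta>"
    hence "a < \<beta>" using c by simp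
    hence "\<exists>p\<in>D. fst p = \<beta>" using rowsplit[of \<beta>] by blast
    thus "D \<inter> rowR n \<beta> \<noteq> {}" using rowNE[OF sub] by blast
  next
    assume "a \<noteq> \<beta>"
    hence "a < \<beta>" using c by simp
    hence "\<exists>p\<in>D. snd p = a" using colsplit[of a] by blast
    thus "D \<inter> colC n a \<noteq> {}" using colNE[OF sub] by blast
  qed
qed




lemma merge_ind: "y < x \<Longrightarrow> b < \<beta> \<Longrightarrow> a \<le> \<beta> \<Longrightarrow> a < i \<Longrightarrow>
  ind (i,b) x y = ind (i,\<beta>) x y + ind (a,b) x y + (if a < x \<and> x \<le> i \<and> b \<le> y \<and> y < \<beta> then 1 else 0)"
  unfolding ind_def by (auto split: if_split)
lemma unswap_ind: "a < i \<Longrightarrow> b < \<beta> \<Longrightarrow>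
  ind (i,b) x y + ind (a,\<beta>) x y = ind (i,\<beta>) x y + ind (a,b) x y + (if a < x \<and> x \<le> i \<and> b \<le> y \<and> y < \<beta> then 1 else 0)"
  unfolding ind_def by (auto split: if_split)
lemma right_ind: "j < \<beta> \<Longrightarrow>
  ind (i,j) x y = ind (i,\<beta>) x y + (if x \<le> i \<and> j \<le> y \<and> y < \<beta> then 1 else 0)"
  unfolding ind_def by (auto split: if_split)
lemma down_ind: "a < i \<Longrightarrow>
  ind (i,b) x y = ind (a,b) x y + (if a < x \<and> x \<le> i \<and> b \<le> y then 1 else 0)"
  unfolding ind_def by (auto split: if_split)

lemma L_sub_N: assumes rD: "rook n D" and TL: "T \<in> Lplus n D" shows "T \<in> Nplus n D"
proof -
  have rT: "rook n T" and TD: "rless n T D" and cardTD: "card D < card T"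
    and nob: "\<not> (\<exists>S. rook n S \<and> rless n T S \<and> rless n S D)" using TL by (auto simp: Lplus_def)
  have sub: "D \<subseteq> Phi n" using rD by (simp add: rook_def)
  have Tsub: "T \<subseteq> Phi n" using rT by (simp add: rook_def)
  have fin: "finite D" using rD rook_finite by blast
  have finT: "finite T" using rT rook_finite by blast
  have rD2: "\<forall>p\<in>D. \<forall>q\<in>D. fst p = fst q \<longrightarrow> p = q" "\<forall>p\<in>D. \<forall>q\<in>D. snd p = snd q \<longrightarrow> p = q"
    using rD by (auto simp: rook_iff)
  have rT2: "\<forall>p\<in>T. \<forall>q\<in>T. fst p = fst q \<longrightarrow> p = q" "\<forall>p\<in>T. \<forall>q\<in>T. snd p = snd q \<longrightarrow> p = q"
    using rT by (auto simp: rook_iff)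
  have hTD: "\<And>x y. y<x \<Longrightarrow> Fc T x y \<le> Fc D x y" using TD rleq_Fc[OF Tsub sub] by (auto simp: rless_def)
  have TneD: "T \<noteq> D" using TD by (simp add: rless_def)
  have cov: "\<And>S. rook n S \<Longrightarrow> (\<forall>x y. y<x \<longrightarrow> Fc T x y \<le> Fc S x y) \<Longrightarrow> (\<forall>x y. y<x \<longrightarrow> Fc S x y \<le> Fc D x y) \<Longrightarrow> S \<noteq> T \<Longrightarrow> S = D"
  proof (rule ccontr)
    fix S assume rS: "rook n S" and a1: "\<forall>x y. y<x \<longrightarrow> Fc T x y \<le> Fc S x y"
      and a2: "\<forall>x y. y<x \<longrightarrow> Fc S x y \<le> Fc D x y" and a3: "S \<noteq> T" and a4: "S \<noteq> D"
    have Ssub: "S \<subseteq> Phi n" using rS by (simp add: rook_def)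
    have "rless n T S" using a1 a3 rleq_Fc[OF Tsub Ssub] by (auto simp: rless_def)
    moreover have "rless n S D" using a2 a4 rleq_Fc[OF Ssub sub] by (auto simp: rless_def)
    ultimately show False using nob rS by blast
  qed
  have up: "\<And>S R. rook n S \<Longrightarrow> S \<noteq> T \<Longrightarrow> (\<And>x y. y<x \<Longrightarrow> Fc S x y = Fc T x y + (if R x y then 1 else 0))
     \<Longrightarrow> (\<And>x y. y<x \<Longrightarrow> R x y \<Longrightarrow> Fc T x y < Fc D x y) \<Longrightarrow> S = D"
  proof -
    fix S R assume rS: "rook n S" and ST: "S \<noteq> T"
      and e: "\<And>x y. y<x \<Longrightarrow> Fc S x y = Fc T x y + (if R x y then 1 else 0)"
      and k: "\<And>x y. y<x \<Longrightarrow> R x y \<Longrightarrow> Fc T x y < Fc D x y"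
    have "\<forall>x y. y<x \<longrightarrow> Fc T x y \<le> Fc S x y" using e by simp
    moreover have "\<forall>x y. y<x \<longrightarrow> Fc S x y \<le> Fc D x y"
    proof (intro allI impI)
      fix x y :: nat assume yx: "y < x"
      show "Fc S x y \<le> Fc D x y"
      proof (cases "R x y")
        case True thus ?thesis using e[OF yx] k[OF yx] by simp
      next
        case False thus ?thesis using e[OF yx] hTD[OF yx] by simp
      qed
    qed
    ultimately show "S = D" using cov rS ST by blast
  qed
  define Z where "Z = {(x,y). y < x \<and> Fc T x y < Fc D x y}"
  have notZ: "\<And>x y. y<x \<Longrightarrow> (x,y) \<notin> Z \<Longrightarrow> Fc T x y = Fc D x y"
    using hTD by (fastforce simp: Z_def)
  have Zne: "Z \<noteq> {}"
  proof
    assume Z: "Z = {}"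
    have "T = D"
    proof (intro set_eqI)
      fix p :: "nat\<times>nat"
      obtain x y where pe: "p = (x,y)" by (cases p)
      show "p \<in> T \<longleftrightarrow> p \<in> D"
      proof (cases "1 \<le> y \<and> y < x")
        case True
        show ?thesis unfolding pe
          by (rule point_det[OF finT fin]) (use True Z notZ in auto)
      next
        case False thus ?thesis using pe sub Tsub by (auto simp: Phi_def)
      qed
    qed
    thus False using TneD by simp
  qed
  have Zsub: "Z \<subseteq> {0..n} \<times> {0..n}"
  proof
    fix p assume pZ: "p \<in> Z"
    obtain x y where pe: "p = (x,y)" by (cases p)
    have "x \<le> n"
    proof (rule ccontr)
      assume "\<not> x \<le> n" hence "Fc D x y = 0" using Fc_zero_big[OF sub] by simp
      thus False using pZ pe by (simp add: Z_def)
    qed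
    thus "p \<in> {0..n} \<times> {0..n}" using pZ pe by (auto simp: Z_def)
  qed
  have Zfin: "finite Z" using Zsub finite_subset by blast
  define i where "i = Max (fst ` Z)"
  have iZ: "i \<in> fst ` Z" unfolding i_def using Zfin Zne by (intro Max_in) auto
  have imax: "\<And>x y. (x,y) \<in> Z \<Longrightarrow> x \<le> i" unfolding i_def using Zfin
    by (metis Max_ge finite_imageI fst_conv image_eqI)
  define Y where "Y = {y. (i,y) \<in> Z}"
  have Yfin: "finite Y" unfolding Y_def
    by (rule finite_subset[of _ "snd ` Z"]) (use Zfin in force)+
  have Yne: "Y \<noteq> {}" using iZ by (force simp: Y_def)
  define j where "j = Min Y"
  have ijZ: "(i,j) \<in> Z" using Min_in[OF Yfin Yne] by (simp add: j_def Y_def)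
  have jmin: "\<And>y. (i,y) \<in> Z \<Longrightarrow> j \<le> y" using Min_le[OF Yfin] by (simp add: j_def Y_def)
  have ji: "j < i" and ltij: "Fc T i j < Fc D i j" using ijZ by (auto simp: Z_def)
  have agree: "\<And>p. i < fst p \<Longrightarrow> (p \<in> T \<longleftrightarrow> p \<in> D)"
  proof -
    fix p :: "nat\<times>nat" assume ip: "i < fst p"
    obtain x y where pe: "p = (x,y)" by (cases p)
    show "p \<in> T \<longleftrightarrow> p \<in> D"
    proof (cases "1 \<le> y \<and> y < x")
      case True
      have nz: "\<And>x' y'. i < x' \<Longrightarrow> (x',y') \<notin> Z" using imax by fastforce
      show ?thesis unfolding pe
        by (rule point_det[OF finT fin]; (rule notZ)?) (use True ip pe nz in auto)
    next
      case False thus ?thesis using pe sub Tsub by (auto simp: Phi_def)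
    qed
  qed
  have j1: "1 \<le> j"
  proof (rule ccontr)
    assume "\<not> 1 \<le> j" hence "j = 0" by simp
    thus False using ltij Fc_zero0[OF sub] Fc_zero0[OF Tsub] by simp
  qed
  have ijDT: "(i,j) \<in> D \<and> (i,j) \<notin> T"
  proof -
    have e1: "Fc T (Suc i) j = Fc D (Suc i) j" using ji imax by (intro notZ) fastforce+
    have e2: "Fc T (Suc i) (j-1) = Fc D (Suc i) (j-1)" using ji imax by (intro notZ) fastforce+
    have e3: "Fc T i (j-1) = Fc D i (j-1)"
    proof (rule notZ)
      show "j - 1 < i" using ji by simp
      show "(i, j-1) \<notin> Z" using jmin[of "j-1"] j1 by fastforce
    qed
    have "(if (i,j) \<in> T then 1 else 0::nat) < (if (i,j) \<in> D then 1 else 0)"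
      using local_id[OF finT j1, of i] local_id[OF fin j1, of i] e1 e2 e3 ltij by linarith
    thus ?thesis by (auto split: if_splits)
  qed
  hence ijD: "(i,j) \<in> D" and ijT: "(i,j) \<notin> T" by auto
  have iP: "i \<le> n" using ijD sub by (auto simp: Phi_def)
  have rowiD: "\<And>c. (i,c) \<in> D \<Longrightarrow> c = j" using rD2(1) ijD by fastforce
  have coljD: "\<And>c. (c,j) \<in> D \<Longrightarrow> c = i" using rD2(2) ijD by fastforce
  have rowT: "\<And>b. (i,b) \<in> T \<Longrightarrow> j < b"
  proof (rule ccontr)
    fix b assume ib: "(i,b) \<in> T" and nb: "\<not> j < b"
    hence bj: "b < j" using ijT by (cases "b = j") auto
    have c1: "card {p\<in>T. fst p = i \<and> snd p \<le> b} \<ge> 1"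
    proof -
      have "{p\<in>T. fst p = i \<and> snd p \<le> b} \<noteq> {}" using ib by auto
      moreover have "finite {p\<in>T. fst p = i \<and> snd p \<le> b}" using finT by simp
      ultimately show ?thesis by (simp add: Suc_le_eq card_gt_0_iff)
    qed
    have c2: "{p\<in>D. fst p = i \<and> snd p \<le> b} = {}" using rowiD bj by fastforce
    have e1: "Fc T (Suc i) b = Fc D (Suc i) b" using ji bj imax by (intro notZ) fastforce+
    have "Fc T i b > Fc D i b" using row_dec[OF finT, of i b] row_dec[OF fin, of i b] c1 c2 e1 by simp
    moreover have "Fc T i b \<le> Fc D i b" using hTD bj ji by simp
    ultimately show False by simp
  qed
  have colTlow: "\<And>c. (c,j) \<in> T \<Longrightarrow> c < i"
  proof -
    fix c assume cT: "(c,j) \<in> T"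
    have "c \<noteq> i" using cT ijT by auto
    moreover have "\<not> i < c" using agree[of "(c,j)"] cT coljD by fastforce
    ultimately show "c < i" by simp
  qed
  have K: "\<And>x y. y < x \<Longrightarrow> x \<le> i \<Longrightarrow> j \<le> y \<Longrightarrow>
     (\<And>p. p\<in>T \<Longrightarrow> x \<le> fst p \<Longrightarrow> fst p \<le> i \<Longrightarrow> j \<le> snd p \<Longrightarrow> snd p \<le> y \<Longrightarrow> False) \<Longrightarrow> Fc T x y < Fc D x y"
  proof -
    fix x y assume yx: "y < x" and xi: "x \<le> i" and jy: "j \<le> y"
      and h: "\<And>p. p\<in>T \<Longrightarrow> x \<le> fst p \<Longrightarrow> fst p \<le> i \<Longrightarrow> j \<le> snd p \<Longrightarrow> snd p \<le> y \<Longrightarrow> False"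
    define AT where "AT = {p\<in>T. x \<le> fst p \<and> j-1 < snd p \<and> snd p \<le> y}"
    define AD where "AD = {p\<in>D. x \<le> fst p \<and> j-1 < snd p \<and> snd p \<le> y}"
    have eT: "Fc T x y = Fc T x (j-1) + card AT" unfolding AT_def by (rule col_dec[OF finT]) (use jy in simp)
    have eD: "Fc D x y = Fc D x (j-1) + card AD" unfolding AD_def by (rule col_dec[OF fin]) (use jy in simp)
    have l0: "Fc T x (j-1) \<le> Fc D x (j-1)" using hTD yx jy by simp
    have s1: "AT \<subseteq> AD - {(i,j)}"
    proof
      fix p assume pA: "p \<in> AT"
      have "j \<le> snd p" using pA j1 by (auto simp: AT_def)
      hence "\<not> fst p \<le> i" using h[of p] pA by (auto simp: AT_def)
      thus "p \<in> AD - {(i,j)}" using pA agree[of p] by (auto simp: AT_def AD_def)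
    qed
    have s2: "(i,j) \<in> AD" using ijD xi jy j1 by (auto simp: AD_def)
    have finAD: "finite AD" using fin by (simp add: AD_def)
    have "card AT \<le> card (AD - {(i,j)})" using s1 finAD by (intro card_mono) auto
    moreover have "card (AD - {(i,j)}) < card AD" by (rule card_Diff1_less[OF finAD s2])
    ultimately show "Fc T x y < Fc D x y" using eT eD l0 by linarith
  qed
  show ?thesis
  proof (cases "\<exists>\<beta>. (i,\<beta>) \<in> T")
    case True
    then obtain \<beta> where ib: "(i,\<beta>) \<in> T" by blast
    have jb: "j < \<beta>" using rowT ib by simp
    have bi: "\<beta> < i" using ib Tsub by (auto simp: Phi_def)
    have rowiT: "\<And>c. (i,c) \<in> T \<Longrightarrow> c = \<beta>" using rT2(1) ib by fastforce
    have colbT: "\<And>c. (c,\<beta>) \<in> T \<Longrightarrow> c = i" using rT2(2) ib by fastforce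
    define Cand where "Cand = {p\<in>T. fst p < i \<and> j \<le> snd p \<and> snd p < \<beta>}"
    show ?thesis
    proof (cases "Cand = {}")
      case False
      have Cfin: "finite Cand" using finT by (simp add: Cand_def)
      define a where "a = Max (fst ` Cand)"
      have "a \<in> fst ` Cand" unfolding a_def using Cfin False by (intro Max_in) auto
      then obtain b where abC: "(a,b) \<in> Cand" by force
      have amax: "\<And>p. p \<in> Cand \<Longrightarrow> fst p \<le> a" unfolding a_def using Cfin by simp
      have abT: "(a,b) \<in> T" and ai: "a < i" and jb2: "j \<le> b" and bb: "b < \<beta>" using abC by (auto simp: Cand_def)
      have ba: "b < a" and an: "a \<le> n" using abT Tsub by (auto simp: Phi_def)
      have b1: "1 \<le> b" using j1 jb2 by simp
      have colbT2: "\<And>c. (c,b) \<in> T \<Longrightarrow> c = a" using rT2(2) abT by fastforce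
      have rowaT: "\<And>c. (a,c) \<in> T \<Longrightarrow> c = b" using rT2(1) abT by fastforce
      have ibT: "(i,b) \<notin> T" using rowiT bb by fastforce
      have Kreg: "\<And>x y. y<x \<Longrightarrow> a < x \<and> x \<le> i \<and> b \<le> y \<and> y < \<beta> \<Longrightarrow> Fc T x y < Fc D x y"
      proof -
        fix x y assume yx: "y < x" and r: "a < x \<and> x \<le> i \<and> b \<le> y \<and> y < \<beta>"
        show "Fc T x y < Fc D x y"
        proof (rule K[OF yx])
          show "x \<le> i" "j \<le> y" using r jb2 by auto
          fix p assume p: "p \<in> T" "x \<le> fst p" "fst p \<le> i" "j \<le> snd p" "snd p \<le> y"
          show False
          proof (cases "fst p = i")
            case True hence "snd p = \<beta>" using rowiT p(1) by (cases p) auto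
            thus False using p r by simp
          next
            case False hence "p \<in> Cand" using p r by (auto simp: Cand_def)
            thus False using amax p r by fastforce
          qed
        qed
      qed
      show ?thesis
      proof (cases "a \<le> \<beta>")
        case True
        define S where "S = T - {(i,\<beta>),(a,b)} \<union> {(i,b)}"
        have rS: "rook n S" unfolding S_def
        proof (rule rook_replace[OF rT])
          show "{(i, \<beta>), (a, b)} \<subseteq> T" using ib abT by auto
          show "{(i, b)} \<subseteq> Phi n" using b1 bb bi iP by (auto simp: Phi_def)
          show "\<forall>q\<in>{(i, b)}. \<forall>p\<in>T - {(i, \<beta>), (a, b)}. fst p \<noteq> fst q \<and> snd p \<noteq> snd q"
          proof (intro ballI)
            fix q p assume q: "q \<in> {(i, b)}" and p: "p \<in> T - {(i, \<beta>), (a, b)}"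
            obtain u v where pe: "p = (u,v)" by (cases p)
            have "u \<noteq> i" using rowiT[of v] p pe by auto
            moreover have "v \<noteq> b" using colbT2[of u] p pe by auto
            ultimately show "fst p \<noteq> fst q \<and> snd p \<noteq> snd q" using q pe by auto
          qed
        qed auto
        have FS0: "Fc S x y + Fc {(i,\<beta>),(a,b)} x y = Fc T x y + Fc {(i,b)} x y" for x y
          unfolding S_def using finT ib abT ibT by (intro Fc_swap) auto
        have FS: "\<And>x y. y<x \<Longrightarrow> Fc S x y = Fc T x y + (if a < x \<and> x \<le> i \<and> b \<le> y \<and> y < \<beta> then 1 else 0)"
        proof -
          fix x y :: nat assume yx: "y < x"
          have "Fc S x y + ind (i,\<beta>) x y + ind (a,b) x y = Fc T x y + ind (i,b) x y"
            using FS0[of x y] ai by (simp add: add.assoc)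
          thus "Fc S x y = Fc T x y + (if a < x \<and> x \<le> i \<and> b \<le> y \<and> y < \<beta> then 1 else 0)"
            using merge_ind[OF yx bb True ai] by linarith
        qed
        have ST: "S \<noteq> T" using ibT by (auto simp: S_def)
        have SD: "S = D" by (rule up[OF rS ST FS Kreg]) auto
        have bj: "b = j" using ijD ijT unfolding SD[symmetric] S_def by auto
        have Teq: "T = D - {(i,j)} \<union> {(i,\<beta>),(a,j)}"
        proof -
          have "D = T - {(i,\<beta>),(a,j)} \<union> {(i,j)}" using SD bj by (simp add: S_def)
          thus ?thesis using ijT ib abT bj by auto
        qed
        have rowaD: "\<forall>p\<in>D. fst p \<noteq> a"
        proof
          fix p assume "p \<in> D" hence "p \<in> S" using SD by simp
          thus "fst p \<noteq> a" unfolding S_def using ai rowaT by (cases p) auto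
        qed
        have colbD: "\<forall>p\<in>D. snd p \<noteq> \<beta>"
        proof
          fix p assume "p \<in> D" hence "p \<in> S" using SD by simp
          thus "snd p \<noteq> \<beta>" unfolding S_def using bb colbT by (cases p) auto
        qed
        have "(a,\<beta>) \<in> Cset n D (i,j)"
        proof (rule cset_cover[OF rD ijD _ True bi rowaD colbD Teq])
          show "j < a" using jb2 ba by simp
          fix S' assume "rook n S'" "\<forall>x y. y<x \<longrightarrow> Fc T x y \<le> Fc S' x y" "\<forall>x y. y<x \<longrightarrow> Fc S' x y \<le> Fc D x y" "S' \<noteq> T"
          thus "S' = D" using cov by blast
        qed
        thus ?thesis unfolding Nplus_def using Teq ijD by blast
      next
        case False
        hence ba2: "\<beta> < a" by simp
        define S where "S = T - {(i,\<beta>),(a,b)} \<union> {(i,b),(a,\<beta>)}"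
        have aBT: "(a,\<beta>) \<notin> T" using rowaT bb by fastforce
        have rS: "rook n S" unfolding S_def
        proof (rule rook_replace[OF rT])
          show "{(i, \<beta>), (a, b)} \<subseteq> T" using ib abT by auto
          show "{(i, b), (a, \<beta>)} \<subseteq> Phi n" using b1 bb bi iP ba2 an jb j1 by (auto simp: Phi_def)
          show "\<forall>p\<in>{(i, b), (a, \<beta>)}. \<forall>q\<in>{(i, b), (a, \<beta>)}. fst p = fst q \<longrightarrow> p = q" using ai by auto
          show "\<forall>p\<in>{(i, b), (a, \<beta>)}. \<forall>q\<in>{(i, b), (a, \<beta>)}. snd p = snd q \<longrightarrow> p = q" using bb by auto
          show "\<forall>q\<in>{(i, b), (a, \<beta>)}. \<forall>p\<in>T - {(i, \<beta>), (a, b)}. fst p \<noteq> fst q \<and> snd p \<noteq> snd q"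
          proof (intro ballI)
            fix q p assume q: "q \<in> {(i, b), (a, \<beta>)}" and p: "p \<in> T - {(i, \<beta>), (a, b)}"
            obtain u v where pe: "p = (u,v)" by (cases p)
            have "u \<noteq> i" using rowiT[of v] p pe by auto
            moreover have "v \<noteq> b" using colbT2[of u] p pe by auto
            moreover have "u \<noteq> a" using rowaT[of v] p pe by auto
            moreover have "v \<noteq> \<beta>" using colbT[of u] p pe by auto
            ultimately show "fst p \<noteq> fst q \<and> snd p \<noteq> snd q" using q pe by auto
          qed
        qed
        have FS0: "Fc S x y + Fc {(i,\<beta>),(a,b)} x y = Fc T x y + Fc {(i,b),(a,\<beta>)} x y" for x y
          unfolding S_def using finT ib abT ibT aBT by (intro Fc_swap) auto
        have FS: "\<And>x y. y<x \<Longrightarrow> Fc S x y = Fc T x y + (if a < x \<and> x \<le> i \<and> b \<le> y \<and> y < \<beta> then 1 else 0)"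
        proof -
          fix x y :: nat assume yx: "y < x"
          have "Fc S x y + ind (i,\<beta>) x y + ind (a,b) x y = Fc T x y + ind (i,b) x y + ind (a,\<beta>) x y"
            using FS0[of x y] ai by (simp add: add.assoc)
          thus "Fc S x y = Fc T x y + (if a < x \<and> x \<le> i \<and> b \<le> y \<and> y < \<beta> then 1 else 0)"
            using unswap_ind[OF ai bb, of x y] by linarith
        qed
        have ST: "S \<noteq> T" using ibT by (auto simp: S_def)
        have SD: "S = D" by (rule up[OF rS ST FS Kreg]) auto
        have "card S + card {(i,\<beta>),(a,b)} = card T + card {(i,b),(a,\<beta>)}"
          unfolding S_def using finT ib abT ibT aBT by (intro card_swap) auto
        hence "card S = card T" using ai by simp
        thus ?thesis using SD cardTD by simp
      qed
    next
      case True
      define S where "S = T - {(i,\<beta>)} \<union> {(i,j)}"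
      have rS: "rook n S" unfolding S_def
      proof (rule rook_replace[OF rT])
        show "{(i, \<beta>)} \<subseteq> T" using ib by auto
        show "{(i, j)} \<subseteq> Phi n" using ijD sub by auto
        show "\<forall>q\<in>{(i, j)}. \<forall>p\<in>T - {(i, \<beta>)}. fst p \<noteq> fst q \<and> snd p \<noteq> snd q"
        proof (intro ballI)
          fix q p assume q: "q \<in> {(i,j)}" and p: "p \<in> T - {(i,\<beta>)}"
          obtain u v where pe: "p = (u,v)" by (cases p)
          have "u \<noteq> i" using rowiT p pe by auto
          moreover have "v \<noteq> j"
          proof
            assume "v = j" hence "u < i" using colTlow p pe by auto
            hence "p \<in> Cand" using p pe \<open>v = j\<close> jb by (auto simp: Cand_def)
            thus False using True by simp
          qed
          ultimately show "fst p \<noteq> fst q \<and> snd p \<noteq> snd q" using q pe by auto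
        qed
      qed auto
      have FS0: "Fc S x y + Fc {(i,\<beta>)} x y = Fc T x y + Fc {(i,j)} x y" for x y
        unfolding S_def using finT ib ijT by (intro Fc_swap) auto
      have FS: "\<And>x y. y<x \<Longrightarrow> Fc S x y = Fc T x y + (if x \<le> i \<and> j \<le> y \<and> y < \<beta> then 1 else 0)"
      proof -
        fix x y :: nat assume yx: "y < x"
        have "Fc S x y + ind (i,\<beta>) x y = Fc T x y + ind (i,j) x y" using FS0[of x y] by simp
        thus "Fc S x y = Fc T x y + (if x \<le> i \<and> j \<le> y \<and> y < \<beta> then 1 else 0)"
          using right_ind[OF jb, of i x y] by linarith
      qed
      have Kreg: "\<And>x y. y<x \<Longrightarrow> x \<le> i \<and> j \<le> y \<and> y < \<beta> \<Longrightarrow> Fc T x y < Fc D x y"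
      proof -
        fix x y assume yx: "y < x" and r: "x \<le> i \<and> j \<le> y \<and> y < \<beta>"
        show "Fc T x y < Fc D x y"
        proof (rule K[OF yx])
          show "x \<le> i" "j \<le> y" using r by auto
          fix p assume p: "p \<in> T" "x \<le> fst p" "fst p \<le> i" "j \<le> snd p" "snd p \<le> y"
          show False
          proof (cases "fst p = i")
            case True hence "snd p = \<beta>" using rowiT p(1) by (cases p) auto
            thus False using p r by simp
          next
            case False hence "p \<in> Cand" using p r by (auto simp: Cand_def)
            thus False using \<open>Cand = {}\<close> by simp
          qed
        qed
      qed
      have ST: "S \<noteq> T" using ijT by (auto simp: S_def)
      have SD: "S = D" by (rule up[OF rS ST FS Kreg]) auto
      have "card S + card {(i,\<beta>)} = card T + card {(i,j)}"
        unfolding S_def using finT ib ijT by (intro card_swap) auto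
      hence "card S = card T" by simp
      thus ?thesis using SD cardTD by simp
    qed
  next
    case False
    hence noi: "\<And>c. (i,c) \<notin> T" by blast
    define Cand where "Cand = {p\<in>T. fst p < i \<and> j \<le> snd p}"
    show ?thesis
    proof (cases "Cand = {}")
      case False
      have Cfin: "finite Cand" using finT by (simp add: Cand_def)
      define a where "a = Max (fst ` Cand)"
      have "a \<in> fst ` Cand" unfolding a_def using Cfin False by (intro Max_in) auto
      then obtain b where abC: "(a,b) \<in> Cand" by force
      have amax: "\<And>p. p \<in> Cand \<Longrightarrow> fst p \<le> a" unfolding a_def using Cfin by simp
      have abT: "(a,b) \<in> T" and ai: "a < i" and jb2: "j \<le> b" using abC by (auto simp: Cand_def)
      have ba: "b < a" using abT Tsub by (auto simp: Phi_def)
      have colbT2: "\<And>c. (c,b) \<in> T \<Longrightarrow> c = a" using rT2(2) abT by fastforce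
      define S where "S = T - {(a,b)} \<union> {(i,b)}"
      have rS: "rook n S" unfolding S_def
      proof (rule rook_replace[OF rT])
        show "{(a, b)} \<subseteq> T" using abT by auto
        show "{(i, b)} \<subseteq> Phi n" using j1 jb2 ba ai iP by (auto simp: Phi_def)
        show "\<forall>q\<in>{(i, b)}. \<forall>p\<in>T - {(a, b)}. fst p \<noteq> fst q \<and> snd p \<noteq> snd q"
        proof (intro ballI)
          fix q p assume q: "q \<in> {(i, b)}" and p: "p \<in> T - {(a, b)}"
          obtain u v where pe: "p = (u,v)" by (cases p)
          have "u \<noteq> i" using noi[of v] p pe by auto
          moreover have "v \<noteq> b" using colbT2[of u] p pe by auto
          ultimately show "fst p \<noteq> fst q \<and> snd p \<noteq> snd q" using q pe by auto
        qed
      qed auto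
      have FS0: "Fc S x y + Fc {(a,b)} x y = Fc T x y + Fc {(i,b)} x y" for x y
        unfolding S_def using finT abT noi by (intro Fc_swap) auto
      have FS: "\<And>x y. y<x \<Longrightarrow> Fc S x y = Fc T x y + (if a < x \<and> x \<le> i \<and> b \<le> y then 1 else 0)"
      proof -
        fix x y :: nat assume yx: "y < x"
        have "Fc S x y + ind (a,b) x y = Fc T x y + ind (i,b) x y" using FS0[of x y] by simp
        thus "Fc S x y = Fc T x y + (if a < x \<and> x \<le> i \<and> b \<le> y then 1 else 0)"
          using down_ind[OF ai, of b x y] by linarith
      qed
      have Kreg: "\<And>x y. y<x \<Longrightarrow> a < x \<and> x \<le> i \<and> b \<le> y \<Longrightarrow> Fc T x y < Fc D x y"
      proof -
        fix x y assume yx: "y < x" and r: "a < x \<and> x \<le> i \<and> b \<le> y"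
        show "Fc T x y < Fc D x y"
        proof (rule K[OF yx])
          show "x \<le> i" "j \<le> y" using r jb2 by auto
          fix p assume p: "p \<in> T" "x \<le> fst p" "fst p \<le> i" "j \<le> snd p" "snd p \<le> y"
          show False
          proof (cases "fst p = i")
            case True thus False using noi p(1) by (cases p) auto
          next
            case False hence "p \<in> Cand" using p by (auto simp: Cand_def)
            thus False using amax p r by fastforce
          qed
        qed
      qed
      have ST: "S \<noteq> T" using noi by (auto simp: S_def)
      have SD: "S = D" by (rule up[OF rS ST FS Kreg]) auto
      have "card S + card {(a,b)} = card T + card {(i,b)}"
        unfolding S_def using finT abT noi by (intro card_swap) auto
      hence "card S = card T" by simp
      thus ?thesis using SD cardTD by simp
    next
      case True
      define S where "S = T - {} \<union> {(i,j)}"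
      have rS: "rook n S" unfolding S_def
      proof (rule rook_replace[OF rT])
        show "{(i, j)} \<subseteq> Phi n" using ijD sub by auto
        show "\<forall>q\<in>{(i, j)}. \<forall>p\<in>T - {}. fst p \<noteq> fst q \<and> snd p \<noteq> snd q"
        proof (intro ballI)
          fix q p assume q: "q \<in> {(i,j)}" and p: "p \<in> T - {}"
          obtain u v where pe: "p = (u,v)" by (cases p)
          have "u \<noteq> i" using noi p pe by auto
          moreover have "v \<noteq> j"
          proof
            assume "v = j" hence "u < i" using colTlow p pe by auto
            hence "p \<in> Cand" using p pe \<open>v = j\<close> by (auto simp: Cand_def)
            thus False using True by simp
          qed
          ultimately show "fst p \<noteq> fst q \<and> snd p \<noteq> snd q" using q pe by auto
        qed
      qed auto
      have FS0: "Fc S x y + Fc {} x y = Fc T x y + Fc {(i,j)} x y" for x y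
        unfolding S_def using finT ijT by (intro Fc_swap) auto
      have FS: "\<And>x y. y<x \<Longrightarrow> Fc S x y = Fc T x y + (if x \<le> i \<and> j \<le> y then 1 else 0)"
        using FS0 by (simp add: ind_def)
      have Kreg: "\<And>x y. y<x \<Longrightarrow> x \<le> i \<and> j \<le> y \<Longrightarrow> Fc T x y < Fc D x y"
      proof -
        fix x y assume yx: "y < x" and r: "x \<le> i \<and> j \<le> y"
        show "Fc T x y < Fc D x y"
        proof (rule K[OF yx])
          show "x \<le> i" "j \<le> y" using r by auto
          fix p assume p: "p \<in> T" "x \<le> fst p" "fst p \<le> i" "j \<le> snd p" "snd p \<le> y"
          show False
          proof (cases "fst p = i")
            case True thus False using noi p(1) by (cases p) auto
          next
            case False hence "p \<in> Cand" using p by (auto simp: Cand_def)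
            thus False using \<open>Cand = {}\<close> by simp
          qed
        qed
      qed
      have ST: "S \<noteq> T" using ijT by (auto simp: S_def)
      have SD: "S = D" by (rule up[OF rS ST FS Kreg]) auto
      have "card S = Suc (card T)" unfolding S_def using finT ijT by simp
      thus ?thesis using SD cardTD by simp
    qed
  qed
qed


theorem lemma3p10:
  fixes n :: nat and D :: "(nat \<times> nat) set"
  assumes "1 \<le> n" and "rook n D"
  shows "Lplus n D = Nplus n D"
  using L_sub_N[OF assms(2)] N_sub_L[OF assms(2)] by blast

end
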